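(* Let $k,r,h$ be positive integers such that $\ell=\frac{k+h}{r}$ is an integer, and let $q$ be a prime power with $q\le\binom{\lfloor k/2\rfloor}{h-1}$. Consider a local $(k,r,h)$-code $C$ over $\mathbb{F}_q$ in which all coefficients of the heavy parities (i.e. the coefficients $c_{j,i}$ in heavy parity $j$ equal to $\sum_{i=1}^k c_{j,i}x_i$, $j\in[h]$, where $x_1,\dots,x_k$ are the data symbols) are drawn uniformly and independently at random from $\mathbb{F}_q$ (the grouping being fixed). Then the probability that $C$ is maximally recoverable is at most $\left(1-\frac{1}{2^h e^{h-1}}\right)^{k/2}$.
   Context: A local $(k,r,h)$-code over $\mathbb{F}_q$ (with $r\mid(k+h)$) is a linear systematic code of dimension $k$ and length $k+h+\frac{k+h}{r}$ consisting of $k$ data symbols $x_1,\dots,x_k$, $h$ heavy parity symbols (each an $\mathbb{F}_q$-linear combination of all data symbols), and, after partitioning the $k+h$ data and heavy parity symbols into $\frac{k+h}{r}$ groups of size $r$, one local parity per group equal to the sum of the group's symbols. A local group is such a group together with its local parity. The code is maximally recoverable if for every set $E$ of coordinates containing exactly one coordinate from each local group, puncturing the code in $E$ (deleting those coordinates) yields a maximum distance separable $[k+h,k]$ code (minimum distance $h+1$). *)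

theory Defs
  imports "HOL-Analysis.Analysis"
begin

text \<open>Symbols 0..k-1 are data symbols, symbols k..k+h-1
 are heavy parities (heavy parity j is symbol k+j), and the coordinates
 k+h .. k+h+l-1 are the local parities (local parity of group t is coordinate
 k+h+t), with l = (k+h) div r.\<close>

definition num_groups :: "nat \<Rightarrow> nat \<Rightarrow> nat \<Rightarrow> nat" where
  "num_groups k r h = (k + h) div r"

definition valid_grouping :: "nat \<Rightarrow> nat \<Rightarrow> nat \<Rightarrow> (nat \<Rightarrow> nat) \<Rightarrow> bool" where
  "valid_grouping k r h g \<longleftrightarrow>
     (\<forall>s<k+h. g s < num_groups k r h) \<and>
     (\<forall>t<num_groups k r h. card {s. s < k + h \<and> g s = t} = r)"

definition sym_val :: "nat \<Rightarrow> (nat \<times> nat \<Rightarrow> 'a::field) \<Rightarrow> (nat \<Rightarrow> 'a) \<Rightarrow> nat \<Rightarrow> 'a" where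
  "sym_val k c x s = (if s < k then x s else (\<Sum>i<k. c (s - k, i) * x i))"

definition codeword :: "nat \<Rightarrow> nat \<Rightarrow> nat \<Rightarrow> (nat \<Rightarrow> nat) \<Rightarrow> (nat \<times> nat \<Rightarrow> 'a::field)
    \<Rightarrow> (nat \<Rightarrow> 'a) \<Rightarrow> nat \<Rightarrow> 'a" where
  "codeword k r h g c x p =
     (if p < k + h then sym_val k c x p
      else (\<Sum>s\<in>{s. s < k + h \<and> g s = p - (k + h)}. sym_val k c x s))"

definition code_length :: "nat \<Rightarrow> nat \<Rightarrow> nat \<Rightarrow> nat" where
  "code_length k r h = k + h + num_groups k r h"

definition local_group :: "nat \<Rightarrow> nat \<Rightarrow> nat \<Rightarrow> (nat \<Rightarrow> nat) \<Rightarrow> nat \<Rightarrow> nat set" where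
  "local_group k r h g t = {s. s < k + h \<and> g s = t} \<union> {k + h + t}"

definition erasure_patterns :: "nat \<Rightarrow> nat \<Rightarrow> nat \<Rightarrow> (nat \<Rightarrow> nat) \<Rightarrow> nat set set" where
  "erasure_patterns k r h g =
     {E. E \<subseteq> {0..<code_length k r h} \<and>
         (\<forall>t<num_groups k r h. card (E \<inter> local_group k r h g t) = 1)}"

definition data_vectors :: "nat \<Rightarrow> (nat \<Rightarrow> 'a) set" where
  "data_vectors k = ({0..<k} \<rightarrow>\<^sub>E UNIV)"

definition punctured_enc :: "nat \<Rightarrow> nat \<Rightarrow> nat \<Rightarrow> (nat \<Rightarrow> nat) \<Rightarrow> (nat \<times> nat \<Rightarrow> 'a::field)
    \<Rightarrow> nat set \<Rightarrow> (nat \<Rightarrow> 'a) \<Rightarrow> (nat \<Rightarrow> 'a)" where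
  "punctured_enc k r h g c E x =
     restrict (codeword k r h g c x) ({0..<code_length k r h} - E)"

definition punctured_code :: "nat \<Rightarrow> nat \<Rightarrow> nat \<Rightarrow> (nat \<Rightarrow> nat) \<Rightarrow> (nat \<times> nat \<Rightarrow> 'a::field)
    \<Rightarrow> nat set \<Rightarrow> (nat \<Rightarrow> 'a) set" where
  "punctured_code k r h g c E = punctured_enc k r h g c E ` data_vectors k"

definition hamming_weight :: "nat set \<Rightarrow> (nat \<Rightarrow> 'a::zero) \<Rightarrow> nat" where
  "hamming_weight S w = card {i \<in> S. w i \<noteq> 0}"

text \<open>Minimum distance of a linear code = minimum weight of a nonzero codeword.\<close>
definition min_distance :: "nat set \<Rightarrow> (nat \<Rightarrow> 'a::zero) set \<Rightarrow> nat" where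
  "min_distance S C = Min (hamming_weight S ` (C - {restrict (\<lambda>_. 0) S}))"

text \<open>The punctured code is an MDS [k+h,k] code: dimension k (the encoding
 is injective on data vectors) and minimum distance h+1.\<close>
definition punctured_is_mds :: "nat \<Rightarrow> nat \<Rightarrow> nat \<Rightarrow> (nat \<Rightarrow> nat) \<Rightarrow> (nat \<times> nat \<Rightarrow> 'a::field)
    \<Rightarrow> nat set \<Rightarrow> bool" where
  "punctured_is_mds k r h g c E \<longleftrightarrow>
     inj_on (punctured_enc k r h g c E) (data_vectors k) \<and>
     min_distance ({0..<code_length k r h} - E) (punctured_code k r h g c E) = h + 1"

definition maximally_recoverable :: "nat \<Rightarrow> nat \<Rightarrow> nat \<Rightarrow> (nat \<Rightarrow> nat) \<Rightarrow> (nat \<times> nat \<Rightarrow> 'a::field) \<Rightarrow> bool" where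
  "maximally_recoverable k r h g c \<longleftrightarrow>
     (\<forall>E\<in>erasure_patterns k r h g. punctured_is_mds k r h g c E)"

definition coeff_space :: "nat \<Rightarrow> nat \<Rightarrow> (nat \<times> nat \<Rightarrow> 'a) set" where
  "coeff_space k h = (({0..<h} \<times> {0..<k}) \<rightarrow>\<^sub>E UNIV)"

definition prob_MR :: "nat \<Rightarrow> nat \<Rightarrow> nat \<Rightarrow> (nat \<Rightarrow> nat) \<Rightarrow> 'a::{finite,field} itself \<Rightarrow> real" where
  "prob_MR k r h g _ =
     real (card {c :: nat \<times> nat \<Rightarrow> 'a. c \<in> coeff_space k h \<and> maximally_recoverable k r h g c})
     / real (card (coeff_space k h :: (nat \<times> nat \<Rightarrow> 'a) set))"

end

theory Submission imports Defs begin


definition lc :: "nat \<Rightarrow> (nat \<times> nat \<Rightarrow> 'a::field) \<Rightarrow> nat set \<Rightarrow> (nat \<Rightarrow> 'a) \<Rightarrow> nat \<Rightarrow> 'a" where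
  "lc h c S x = restrict (\<lambda>r. \<Sum>i\<in>S. c (r,i) * x i) {0..<h}"

definition WS :: "nat \<Rightarrow> (nat \<times> nat \<Rightarrow> 'a::field) \<Rightarrow> nat set \<Rightarrow> (nat \<Rightarrow> 'a) set" where
  "WS h c S = lc h c S ` (S \<rightarrow>\<^sub>E UNIV)"

definition indep :: "nat \<Rightarrow> (nat \<times> nat \<Rightarrow> 'a::field) \<Rightarrow> nat set \<Rightarrow> bool" where
  "indep h c M \<longleftrightarrow> (\<forall>S\<subseteq>M. card S \<le> h \<longrightarrow>
      (\<forall>x. (\<forall>r<h. (\<Sum>i\<in>S. c (r,i) * x i) = 0) \<longrightarrow> (\<forall>i\<in>S. x i = 0)))"

definition col :: "nat \<Rightarrow> (nat \<times> nat \<Rightarrow> 'a) \<Rightarrow> nat \<Rightarrow> nat \<Rightarrow> 'a" where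
  "col h c i = restrict (\<lambda>r. c (r,i)) {0..<h}"

definition bad :: "nat \<Rightarrow> (nat \<times> nat \<Rightarrow> 'a::field) \<Rightarrow> nat set set \<Rightarrow> (nat \<Rightarrow> 'a) set" where
  "bad h c F = (\<Union>S\<in>F. WS h c S)"

lemma lc_lin:
  "lc h c S (restrict (\<lambda>i. \<alpha> * x i + \<beta> * y i) S) =
     restrict (\<lambda>r. \<alpha> * lc h c S x r + \<beta> * lc h c S y r) {0..<h}"
proof
  fix r show "lc h c S (restrict (\<lambda>i. \<alpha> * x i + \<beta> * y i) S) r =
     restrict (\<lambda>r. \<alpha> * lc h c S x r + \<beta> * lc h c S y r) {0..<h} r"
  proof (cases "r < h")
    case True
    have "(\<Sum>i\<in>S. c (r,i) * restrict (\<lambda>i. \<alpha> * x i + \<beta> * y i) S i)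
        = (\<Sum>i\<in>S. \<alpha> * (c (r,i) * x i) + \<beta> * (c (r,i) * y i))"
      by (rule sum.cong) (auto simp: algebra_simps)
    also have "\<dots> = \<alpha> * (\<Sum>i\<in>S. c (r,i) * x i) + \<beta> * (\<Sum>i\<in>S. c (r,i) * y i)"
      by (simp add: sum.distrib sum_distrib_left)
    finally show ?thesis using True by (simp add: lc_def)
  qed (simp add: lc_def)
qed

lemma lc_PiE: "lc h c S x \<in> {0..<h} \<rightarrow>\<^sub>E UNIV"
  by (simp add: lc_def)

lemma WS_PiE: "WS h c S \<subseteq> {0..<h} \<rightarrow>\<^sub>E UNIV"
  unfolding WS_def by (rule image_subsetI) (rule lc_PiE)

lemma indepD:
  assumes "indep h c M" "S \<subseteq> M" "card S \<le> h" "\<forall>r<h. (\<Sum>i\<in>S. c (r,i) * x i) = 0" "i \<in> S"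
  shows "x i = 0"
  using assms unfolding indep_def by blast

lemma indep_mono: "indep h c M \<Longrightarrow> M' \<subseteq> M \<Longrightarrow> indep h c M'"
  unfolding indep_def by blast

lemma card_WS:
  fixes c :: "nat \<times> nat \<Rightarrow> 'a::{finite,field}"
  assumes ind: "indep h c M" and SM: "S \<subseteq> M" and fin: "finite S" and cS: "card S \<le> h"
  shows "card (WS h c S) = CARD('a) ^ card S"
proof -
  have "inj_on (lc h c S) (S \<rightarrow>\<^sub>E UNIV)"
  proof (rule inj_onI)
    fix x y assume x: "x \<in> S \<rightarrow>\<^sub>E UNIV" and y: "y \<in> S \<rightarrow>\<^sub>E UNIV" and e: "lc h c S x = lc h c S y"
    have z: "\<forall>r<h. (\<Sum>i\<in>S. c (r,i) * (x i - y i)) = 0"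
    proof (intro allI impI)
      fix r assume "r < h"
      from fun_cong[OF e, of r] this have "(\<Sum>i\<in>S. c (r,i) * x i) = (\<Sum>i\<in>S. c (r,i) * y i)"
        by (simp add: lc_def)
      thus "(\<Sum>i\<in>S. c (r,i) * (x i - y i)) = 0"
        by (simp add: right_diff_distrib sum_subtractf)
    qed
    have "\<forall>i\<in>S. x i - y i = 0"
      using indepD[OF ind SM cS z] by blast
    then show "x = y" by (intro PiE_ext[OF x y]) simp
  qed
  then have "card (WS h c S) = card (S \<rightarrow>\<^sub>E (UNIV::'a set))"
    by (simp add: WS_def card_image)
  also have "\<dots> = CARD('a) ^ card S" using fin by (simp add: card_PiE)
  finally show ?thesis .
qed

lemma col_in_WS:
  assumes "finite S" "s \<in> S"
  shows "col h c s \<in> WS h c S"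
proof -
  let ?x = "restrict (\<lambda>i. if i = s then 1 else 0) S"
  have "lc h c S ?x = col h c s"
  proof
    fix r
    have "(\<Sum>i\<in>S. c (r,i) * ?x i) = (\<Sum>i\<in>S. if i = s then c (r,i) else 0)"
      by (rule sum.cong) auto
    also have "\<dots> = c (r,s)" using assms by simp
    finally show "lc h c S ?x r = col h c s r" by (simp add: lc_def col_def)
  qed
  moreover have "?x \<in> S \<rightarrow>\<^sub>E UNIV" by simp
  ultimately show ?thesis unfolding WS_def by (metis image_eqI)
qed

lemma col_notin_WS:
  assumes ind: "indep h c M" and SM: "S \<subseteq> M" and fin: "finite S" and cS: "card S = h - 1"
    and hp: "h > 0" and s: "s \<in> M" "s \<notin> S"
  shows "col h c s \<notin> WS h c S"
proof
  assume "col h c s \<in> WS h c S"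
  then obtain x where x: "x \<in> S \<rightarrow>\<^sub>E UNIV" and e: "col h c s = lc h c S x"
    unfolding WS_def by blast
  define z where "z = (\<lambda>i. if i = s then -1 else x i)"
  have zz: "\<forall>r<h. (\<Sum>i\<in>insert s S. c (r,i) * z i) = 0"
  proof (intro allI impI)
    fix r assume r: "r < h"
    have "(\<Sum>i\<in>insert s S. c (r,i) * z i) = c (r,s) * z s + (\<Sum>i\<in>S. c (r,i) * z i)"
      using fin s by simp
    also have "(\<Sum>i\<in>S. c (r,i) * z i) = (\<Sum>i\<in>S. c (r,i) * x i)"
      using s by (intro sum.cong) (auto simp: z_def)
    also have "\<dots> = c (r,s)" using fun_cong[OF e, of r] r by (simp add: lc_def col_def)
    finally show "(\<Sum>i\<in>insert s S. c (r,i) * z i) = 0" by (simp add: z_def)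
  qed
  have i1: "insert s S \<subseteq> M" using SM s by auto
  have i2: "card (insert s S) \<le> h" using fin s cS hp by simp
  have "z s = 0" by (rule indepD[OF ind i1 i2 zz]) simp
  thus False by (simp add: z_def)
qed

lemma WS_inter:
  fixes c :: "nat \<times> nat \<Rightarrow> 'a::{finite,field}"
  assumes ind: "indep h c M" and SM: "S \<subseteq> M" "S' \<subseteq> M" and fin: "finite S" "finite S'"
    and cS: "card S = h - 1" "card S' = h - 1" and hp: "h > 0" and ne: "S \<noteq> S'"
  shows "CARD('a) * card (WS h c S \<inter> WS h c S') \<le> card (WS h c S')"
proof -
  have "\<not> S' \<subseteq> S"
  proof
    assume "S' \<subseteq> S"
    then have "S' = S" using card_subset_eq[OF fin(1)] cS by simp
    with ne show False by simp
  qed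
  then obtain s where s: "s \<in> S'" "s \<notin> S" by blast
  let ?v = "col h c s"
  have vS': "?v \<in> WS h c S'" using col_in_WS fin s by blast
  have vS: "?v \<notin> WS h c S" using col_notin_WS[OF ind SM(1) fin(1) cS(1) hp] s SM by blast
  let ?W = "WS h c S \<inter> WS h c S'"
  define \<phi> where "\<phi> = (\<lambda>(w::nat\<Rightarrow>'a, t::'a). restrict (\<lambda>r. 1 * w r + t * ?v r) {0..<h})"
  have inj: "inj_on \<phi> (?W \<times> UNIV)"
  proof (rule inj_onI, clarify)
    fix w t w' t' assume w: "w \<in> WS h c S" "w \<in> WS h c S'" and w': "w' \<in> WS h c S" "w' \<in> WS h c S'"
      and e: "\<phi> (w, t) = \<phi> (w', t')"
    have er: "w r + t * ?v r = w' r + t' * ?v r" if r: "r < h" for r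
    proof -
      have "\<phi> (w, t) r = \<phi> (w', t') r" using e by simp
      then show ?thesis using r by (simp add: \<phi>_def)
    qed
    show "w = w' \<and> t = t'"
    proof (cases "t = t'")
      case True
      have "w r = w' r" for r
      proof (cases "r < h")
        case True then show ?thesis using er[of r] \<open>t = t'\<close> by simp
      next
        case False
        have r: "r \<notin> {0..<h}" using False by simp
        show ?thesis using PiE_arb[OF subsetD[OF WS_PiE w(1)] r] PiE_arb[OF subsetD[OF WS_PiE w'(1)] r] by simp
      qed
      then show ?thesis using True by auto
    next
      case False
      obtain x where x: "x \<in> S \<rightarrow>\<^sub>E UNIV" "w = lc h c S x" using w unfolding WS_def by blast
      obtain x' where x': "x' \<in> S \<rightarrow>\<^sub>E UNIV" "w' = lc h c S x'" using w' unfolding WS_def by blast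
      let ?u = "inverse (t - t')"
      have "?v = restrict (\<lambda>r. ?u * w' r + (- ?u) * w r) {0..<h}"
      proof
        fix r show "?v r = restrict (\<lambda>r. ?u * w' r + (- ?u) * w r) {0..<h} r"
        proof (cases "r < h")
          case True
          have "(t - t') * ?v r = w' r - w r" using er[OF True] by (simp add: algebra_simps)
          moreover have "?v r = ?u * ((t - t') * ?v r)" using False by simp
          ultimately have "?v r = ?u * (w' r - w r)" by simp
          then show ?thesis using True by (simp add: algebra_simps)
        qed (simp add: col_def)
      qed
      also have "\<dots> = lc h c S (restrict (\<lambda>i. ?u * x' i + (- ?u) * x i) S)"
        unfolding x(2) x'(2) by (rule lc_lin[symmetric])
      finally have vv: "?v = lc h c S (restrict (\<lambda>i. ?u * x' i + (- ?u) * x i) S)" .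
      have "?v \<in> WS h c S" unfolding WS_def by (rule image_eqI[where f="lc h c S", OF vv]) simp
      with vS show ?thesis by blast
    qed
  qed
  have img: "\<phi> ` (?W \<times> UNIV) \<subseteq> WS h c S'"
  proof clarify
    fix w t assume "w \<in> WS h c S" "w \<in> WS h c S'"
    then obtain y where y: "y \<in> S' \<rightarrow>\<^sub>E UNIV" "w = lc h c S' y" unfolding WS_def by blast
    obtain e where e: "e \<in> S' \<rightarrow>\<^sub>E UNIV" "?v = lc h c S' e" using vS' unfolding WS_def by blast
    have "\<phi> (w, t) = restrict (\<lambda>r. 1 * lc h c S' y r + t * lc h c S' e r) {0..<h}"
      unfolding \<phi>_def y(2) e(2)[symmetric] by simp
    also have "\<dots> = lc h c S' (restrict (\<lambda>i. 1 * y i + t * e i) S')"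
      by (rule lc_lin[symmetric])
    finally have "\<phi> (w, t) = lc h c S' (restrict (\<lambda>i. 1 * y i + t * e i) S')" .
    then show "\<phi> (w, t) \<in> WS h c S'" unfolding WS_def by (rule image_eqI[where f="lc h c S'"]) simp
  qed
  have fW: "finite (WS h c S')" using WS_PiE by (rule finite_subset) (simp add: finite_PiE)
  have "card (?W \<times> (UNIV::'a set)) \<le> card (WS h c S')"
    using card_inj_on_le[OF inj img fW] .
  moreover have "card (?W \<times> (UNIV::'a set)) = card ?W * CARD('a)" by (rule card_cartesian_product)
  ultimately show ?thesis by (metis mult.commute)
qed

lemma lin_aux: "na - P \<le> U \<Longrightarrow> I \<le> R \<Longrightarrow> Z = a + U - I \<Longrightarrow> Y = P + R \<Longrightarrow> X = na + a \<Longrightarrow> X - Y \<le> (Z::real)"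
  by linarith

lemma bonferroni:
  assumes "finite I" "\<forall>i\<in>I. finite (W i) \<and> real (card (W i)) = a"
    "\<forall>i\<in>I. \<forall>j\<in>I. i \<noteq> j \<longrightarrow> q * real (card (W i \<inter> W j)) \<le> a" "q > 0"
  shows "real (card (\<Union>i\<in>I. W i)) \<ge> real (card I) * a - real (card I) * (real (card I) - 1) / 2 * a / q"
  using assms
proof (induction I rule: finite_induct)
  case empty then show ?case by simp
next
  case (insert x I)
  let ?U = "\<Union>i\<in>I. W i"
  let ?n = "real (card I)"
  have h2: "\<forall>i\<in>I. finite (W i) \<and> real (card (W i)) = a" using insert.prems(1) by blast
  have h3: "\<forall>i\<in>I. \<forall>j\<in>I. i \<noteq> j \<longrightarrow> q * real (card (W i \<inter> W j)) \<le> a" using insert.prems(2) by blast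
  have IH: "real (card ?U) \<ge> ?n * a - ?n * (?n - 1) / 2 * a / q" using insert.IH[OF h2 h3 insert.prems(3)] .
  have fx: "finite (W x)" "real (card (W x)) = a" using insert.prems(1) by blast+
  have fU: "finite ?U" using h2 insert.hyps(1) by blast
  have "card (W x \<inter> ?U) = card (\<Union>j\<in>I. W x \<inter> W j)" by (simp only: Int_UN_distrib)
  also have "\<dots> \<le> (\<Sum>j\<in>I. card (W x \<inter> W j))" by (rule card_UN_le[OF insert(1)])
  finally have "real (card (W x \<inter> ?U)) \<le> (\<Sum>j\<in>I. real (card (W x \<inter> W j)))"
    by (simp add: of_nat_sum[symmetric] del: of_nat_sum)
  also have "\<dots> \<le> (\<Sum>j\<in>I. a / q)"
  proof (rule sum_mono)
    fix j assume j: "j \<in> I"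
    have "x \<noteq> j" using j insert.hyps(2) by blast
    then have "q * real (card (W x \<inter> W j)) \<le> a" using insert.prems(2) j by blast
    then show "real (card (W x \<inter> W j)) \<le> a / q" using insert.prems(3) by (simp add: pos_le_divide_eq mult.commute)
  qed
  also have "\<dots> = ?n * a / q" by simp
  finally have iU: "real (card (W x \<inter> ?U)) \<le> ?n * a / q" .
  have "card (W x \<union> ?U) + card (W x \<inter> ?U) = card (W x) + card ?U"
    using card_Un_Int[OF fx(1) fU] by simp
  then have "real (card (W x \<union> ?U)) + real (card (W x \<inter> ?U)) = real (card (W x)) + real (card ?U)"
    by (metis of_nat_add)
  then have e1: "real (card (W x \<union> ?U)) = a + real (card ?U) - real (card (W x \<inter> ?U))"
    using fx(2) by linarith
  have e2: "card (insert x I) = card I + 1" using insert.hyps by simp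
  have e3: "(?n + 1) * (?n + 1 - 1) / 2 * a / q = ?n * (?n - 1) / 2 * a / q + ?n * a / q"
    using insert.prems(3) by (simp add: field_simps)
  have "real (card (\<Union>i\<in>insert x I. W i)) = real (card (W x \<union> ?U))" by simp
  moreover have e4: "(?n+1)*a = ?n*a + a" by (simp add: algebra_simps)
  moreover have "real (card (W x \<union> ?U)) \<ge> (?n+1)*a - (?n+1)*(?n+1-1)/2*a/q"
    by (rule lin_aux[OF IH iU e1 e3 e4])
  moreover have "real (card (insert x I)) = ?n + 1" using e2 by simp
  ultimately show ?case by simp
qed


lemma core:
  fixes c :: "nat \<times> nat \<Rightarrow> 'a::{finite,field}"
  assumes ind: "indep h c {0..<m}" and F: "F \<subseteq> {S. S \<subseteq> {0..<m} \<and> card S = h - 1}"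
    and cF: "card F = CARD('a)" and hp: "h > 0"
  shows "real (card (({0..<h} \<rightarrow>\<^sub>E (UNIV::'a set)) - bad h c F)) \<le> real CARD('a) ^ h / 2"
proof -
  let ?q = "CARD('a)"
  let ?V = "{0..<h} \<rightarrow>\<^sub>E (UNIV::'a set)"
  have finF: "finite F" using F by (rule finite_subset) auto
  have q0: "?q > 0" by simp
  have Ssub: "\<And>S. S \<in> F \<Longrightarrow> S \<subseteq> {0..<m} \<and> finite S \<and> card S = h - 1"
    using F finite_subset by blast
  have cW: "\<And>S. S \<in> F \<Longrightarrow> finite (WS h c S) \<and> real (card (WS h c S)) = real ?q ^ (h - 1)"
  proof -
    fix S assume "S \<in> F"
    then have "S \<subseteq> {0..<m}" "finite S" "card S = h - 1" using Ssub by auto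
    moreover have "finite (WS h c S)" using WS_PiE by (rule finite_subset) (simp add: finite_PiE)
    ultimately show "finite (WS h c S) \<and> real (card (WS h c S)) = real ?q ^ (h - 1)"
      using card_WS[OF ind, of S] by simp
  qed
  have pw: "\<forall>S\<in>F. \<forall>S'\<in>F. S \<noteq> S' \<longrightarrow> real ?q * real (card (WS h c S \<inter> WS h c S')) \<le> real ?q ^ (h - 1)"
  proof (intro ballI impI)
    fix S S' assume S: "S \<in> F" and S': "S' \<in> F" and ne: "S \<noteq> S'"
    have "?q * card (WS h c S \<inter> WS h c S') \<le> card (WS h c S')"
      using WS_inter[OF ind, of S S'] Ssub[OF S] Ssub[OF S'] hp ne by blast
    then have "real ?q * real (card (WS h c S \<inter> WS h c S')) \<le> real (card (WS h c S'))"
      by (metis of_nat_le_iff of_nat_mult)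
    then show "real ?q * real (card (WS h c S \<inter> WS h c S')) \<le> real ?q ^ (h - 1)"
      using cW[OF S'] by simp
  qed
  have B: "real (card (bad h c F)) \<ge> real (card F) * real ?q ^ (h - 1)
      - real (card F) * (real (card F) - 1) / 2 * real ?q ^ (h - 1) / real ?q"
    unfolding bad_def by (rule bonferroni[OF finF]) (use cW pw in auto)
  have qh: "real ?q * real ?q ^ (h - 1) = real ?q ^ h"
    using hp by (metis Suc_diff_1 power_Suc)
  have "real (card (bad h c F)) \<ge> real ?q ^ h / 2"
  proof -
    let ?a = "real ?q ^ (h - 1)"
    have "real ?q * (real ?q - 1) / 2 * ?a / real ?q = (real ?q - 1) / 2 * ?a"
      using q0 by (simp add: field_simps)
    then have "real (card (bad h c F)) \<ge> real ?q * ?a - (real ?q - 1) / 2 * ?a"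
      using B cF by simp
    moreover have "real ?q * ?a - (real ?q - 1) / 2 * ?a = (real ?q * ?a) / 2 + ?a / 2"
      by (simp add: field_simps)
    moreover have "?a \<ge> 0" by simp
    ultimately show ?thesis using qh by linarith
  qed
  note lb = this
  have bV: "bad h c F \<subseteq> ?V" unfolding bad_def by (rule UN_least) (rule WS_PiE)
  have fV: "finite ?V" by (simp add: finite_PiE)
  have cV: "card ?V = ?q ^ h" by (simp add: card_PiE)
  have c1: "card (bad h c F) \<le> ?q ^ h" using card_mono[OF fV bV] cV by simp
  have c2: "card (?V - bad h c F) = ?q ^ h - card (bad h c F)"
    using card_Diff_subset[OF finite_subset[OF bV fV] bV] cV by simp
  have "real (card (?V - bad h c F)) = real ?q ^ h - real (card (bad h c F))"
    using c1 c2 by (simp add: of_nat_diff)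
  then show ?thesis using lb by simp
qed

lemma indep_cong:
  assumes "indep h c {0..<m}" "\<forall>r<h. \<forall>i<m. c (r,i) = c' (r,i)"
  shows "indep h c' {0..<m}"
  unfolding indep_def
proof (intro allI impI ballI)
  fix S x i assume S: "S \<subseteq> {0..<m}" and cS: "card S \<le> h"
    and H: "\<forall>r<h. (\<Sum>i\<in>S. c' (r,i) * x i) = 0" and i: "i \<in> S"
  have "\<forall>r<h. (\<Sum>i\<in>S. c (r,i) * x i) = 0"
  proof (intro allI impI)
    fix r assume r: "r < h"
    have "(\<Sum>i\<in>S. c (r,i) * x i) = (\<Sum>i\<in>S. c' (r,i) * x i)"
      using S r assms(2) by (intro sum.cong) auto
    then show "(\<Sum>i\<in>S. c (r,i) * x i) = 0" using H r by simp
  qed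
  then show "x i = 0" using indepD[OF assms(1) S cS _ i] by blast
qed

lemma bad_cong:
  assumes "\<forall>S\<in>F. S \<subseteq> {0..<m}" "\<forall>r<h. \<forall>i<m. c (r,i) = c' (r,i)"
  shows "bad h c F = bad h c' F"
proof -
  have "lc h c S x = lc h c' S x" if "S \<subseteq> {0..<m}" for S x
  proof
    fix r show "lc h c S x r = lc h c' S x r"
      using that assms(2) by (cases "r < h") (auto simp: lc_def intro!: sum.cong)
  qed
  then have "lc h c S = lc h c' S" if "S \<subseteq> {0..<m}" for S using that by blast
  then show ?thesis using assms(1) unfolding bad_def WS_def by auto
qed

definition Sset :: "nat \<Rightarrow> nat \<Rightarrow> nat set set \<Rightarrow> nat \<Rightarrow> 'a itself \<Rightarrow> (nat \<times> nat \<Rightarrow> 'a::field) set" where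
  "Sset h m F j _ = {c \<in> ({0..<h} \<times> {0..<j}) \<rightarrow>\<^sub>E UNIV. indep h c {0..<m} \<and>
      (\<forall>i\<in>{m..<j}. col h c i \<notin> bad h c F)}"

lemma step:
  fixes B :: real
  assumes mj: "m \<le> j" and F: "\<forall>S\<in>F. S \<subseteq> {0..<m}"
    and Bb: "\<forall>c\<in>Sset h m F j TYPE('a::{finite,field}). real (card (({0..<h} \<rightarrow>\<^sub>E (UNIV::'a set)) - bad h c F)) \<le> B"
  shows "real (card (Sset h m F (Suc j) TYPE('a))) \<le> real (card (Sset h m F j TYPE('a))) * B"
proof -
  let ?V = "{0..<h} \<rightarrow>\<^sub>E (UNIV::'a set)"
  let ?A = "Sset h m F (Suc j) TYPE('a)"
  let ?B = "Sset h m F j TYPE('a)"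
  define \<phi> where "\<phi> = (\<lambda>c::nat\<times>nat\<Rightarrow>'a. (restrict c ({0..<h} \<times> {0..<j}), col h c j))"
  have finB: "finite ?B"
    by (rule finite_subset[of _ "({0..<h} \<times> {0..<j}) \<rightarrow>\<^sub>E (UNIV::'a set)"])
       (auto simp: Sset_def intro!: finite_PiE)
  have agree: "\<forall>r<h. \<forall>i<m. c (r,i) = restrict c ({0..<h} \<times> {0..<j}) (r,i)" for c :: "nat\<times>nat\<Rightarrow>'a"
    using mj by auto
  have img: "\<phi> ` ?A \<subseteq> Sigma ?B (\<lambda>a. ?V - bad h a F)"
  proof (rule image_subsetI)
    fix c assume cA: "c \<in> ?A"
    let ?a = "restrict c ({0..<h} \<times> {0..<j})"
    have ic: "indep h c {0..<m}" using cA by (simp add: Sset_def)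
    have ia: "indep h ?a {0..<m}" by (rule indep_cong[OF ic agree])
    have bd: "bad h ?a F = bad h c F" by (rule sym[OF bad_cong[OF F agree[of c]]])
    have colq: "col h ?a i = col h c i" if "i < j" for i
      using that by (auto simp: col_def)
    have "?a \<in> ?B"
      using cA ia bd colq by (auto simp: Sset_def)
    moreover have "col h c j \<in> ?V - bad h ?a F"
      using cA bd mj by (auto simp: Sset_def col_def)
    ultimately show "\<phi> c \<in> Sigma ?B (\<lambda>a. ?V - bad h a F)" unfolding \<phi>_def by simp
  qed
  have inj: "inj_on \<phi> ?A"
  proof (rule inj_onI)
    fix c c' assume c: "c \<in> ?A" and c': "c' \<in> ?A" and e: "\<phi> c = \<phi> c'"
    have P: "c \<in> ({0..<h} \<times> {0..<Suc j}) \<rightarrow>\<^sub>E UNIV" "c' \<in> ({0..<h} \<times> {0..<Suc j}) \<rightarrow>\<^sub>E UNIV"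
      using c c' by (auto simp: Sset_def)
    show "c = c'"
    proof (rule PiE_ext[OF P])
      fix p assume p: "p \<in> {0..<h} \<times> {0..<Suc j}"
      obtain r i where ri: "p = (r,i)" by fastforce
      show "c p = c' p"
      proof (cases "i < j")
        case True
        have "restrict c ({0..<h} \<times> {0..<j}) (r,i) = restrict c' ({0..<h} \<times> {0..<j}) (r,i)"
          using e unfolding \<phi>_def by simp
        then show ?thesis using True p ri by simp
      next
        case False
        then have "i = j" using p ri by simp
        have "col h c j r = col h c' j r" using e unfolding \<phi>_def by simp
        then show ?thesis using p ri \<open>i = j\<close> by (simp add: col_def)
      qed
    qed
  qed
  have finS: "finite (Sigma ?B (\<lambda>a. ?V - bad h a F))"
    by (rule finite_SigmaI[OF finB]) (simp add: finite_PiE)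
  have "card ?A \<le> card (Sigma ?B (\<lambda>a. ?V - bad h a F))"
    by (rule card_inj_on_le[OF inj img finS])
  also have "\<dots> = (\<Sum>a\<in>?B. card (?V - bad h a F))"
    by (rule card_SigmaI[OF finB]) (simp add: finite_PiE)
  finally have "real (card ?A) \<le> (\<Sum>a\<in>?B. real (card (?V - bad h a F)))"
    by (simp add: of_nat_sum[symmetric] del: of_nat_sum)
  also have "\<dots> \<le> (\<Sum>a\<in>?B. B)" by (rule sum_mono) (use Bb in blast)
  also have "\<dots> = real (card ?B) * B" by simp
  finally show ?thesis .
qed


lemma iter:
  fixes B :: real
  assumes F: "\<forall>S\<in>F. S \<subseteq> {0..<m}" and B0: "B \<ge> 0"
    and Bb: "\<forall>j\<ge>m. \<forall>c\<in>Sset h m F j TYPE('a::{finite,field}). real (card (({0..<h} \<rightarrow>\<^sub>E (UNIV::'a set)) - bad h c F)) \<le> B"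
  shows "real (card (Sset h m F (m + d) TYPE('a))) \<le> real CARD('a) ^ (h * m) * B ^ d"
proof (induction d)
  case 0
  have "Sset h m F m TYPE('a) \<subseteq> ({0..<h} \<times> {0..<m}) \<rightarrow>\<^sub>E (UNIV::'a set)"
    by (auto simp: Sset_def)
  then have "card (Sset h m F m TYPE('a)) \<le> card (({0..<h} \<times> {0..<m}) \<rightarrow>\<^sub>E (UNIV::'a set))"
    by (rule card_mono[rotated]) (simp add: finite_PiE)
  also have "\<dots> = CARD('a) ^ (h * m)" by (simp add: card_PiE card_cartesian_product)
  finally have "card (Sset h m F m TYPE('a)) \<le> CARD('a) ^ (h * m)" .
  then have "real (card (Sset h m F m TYPE('a))) \<le> real (CARD('a) ^ (h * m))" by (rule of_nat_mono)
  then show ?case by simp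
next
  case (Suc d)
  have Bj: "\<forall>c\<in>Sset h m F (m + d) TYPE('a). real (card (({0..<h} \<rightarrow>\<^sub>E (UNIV::'a set)) - bad h c F)) \<le> B"
    using spec[OF Bb, of "m + d"] by simp
  have "real (card (Sset h m F (Suc (m + d)) TYPE('a))) \<le> real (card (Sset h m F (m + d) TYPE('a))) * B"
    by (rule step[OF le_add1 F Bj])
  also have "\<dots> \<le> real CARD('a) ^ (h * m) * B ^ d * B"
    by (rule mult_right_mono[OF Suc.IH B0])
  finally show ?case by (simp add: mult.assoc mult.commute)
qed

lemma mr_indep:
  fixes c :: "nat \<times> nat \<Rightarrow> 'a::{finite,field}"
  assumes MR: "maximally_recoverable k r h g c"
  shows "indep h c {0..<k}"
  unfolding indep_def
proof (intro allI impI ballI)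
  fix S x i0 assume S: "S \<subseteq> {0..<k}" and cS: "card S \<le> h"
    and H: "\<forall>r<h. (\<Sum>i\<in>S. c (r,i) * x i) = 0" and i0: "i0 \<in> S"
  show "x i0 = 0"
  proof (rule ccontr)
    assume xi0: "x i0 \<noteq> 0"
    let ?l = "num_groups k r h"
    let ?E = "{k+h..<k+h+?l}"
    have EP: "?E \<in> erasure_patterns k r h g"
      unfolding erasure_patterns_def
    proof (intro CollectI conjI allI impI)
      show "?E \<subseteq> {0..<code_length k r h}" by (auto simp: code_length_def)
    next
      fix t assume t: "t < ?l"
      have "?E \<inter> local_group k r h g t = {k + h + t}"
        using t by (auto simp: local_group_def)
      then show "card (?E \<inter> local_group k r h g t) = 1" by simp
    qed
    have D: "{0..<code_length k r h} - ?E = {0..<k+h}" by (auto simp: code_length_def)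
    have "punctured_is_mds k r h g c ?E" using MR EP unfolding maximally_recoverable_def by blast
    then have "min_distance ({0..<code_length k r h} - ?E) (punctured_code k r h g c ?E) = h + 1"
      unfolding punctured_is_mds_def by blast
    then have md: "min_distance {0..<k+h} (punctured_code k r h g c ?E) = h + 1"
      using D by simp
    define x' where "x' = restrict (\<lambda>i. if i \<in> S then x i else 0) {0..<k}"
    have x'D: "x' \<in> data_vectors k" by (simp add: x'_def data_vectors_def)
    define w where "w = punctured_enc k r h g c ?E x'"
    have wC: "w \<in> punctured_code k r h g c ?E" using x'D by (simp add: w_def punctured_code_def)
    have i0k: "i0 < k" using S i0 by auto
    have wval: "w p = codeword k r h g c x' p" if "p < k + h" for p
      using that by (simp add: w_def punctured_enc_def D)
    have "w i0 = x i0" using wval[of i0] i0k i0 by (simp add: codeword_def sym_val_def x'_def)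
    then have wi0: "w i0 \<noteq> 0" using xi0 by simp
    have wnz: "w \<noteq> restrict (\<lambda>_. 0) {0..<k+h}"
    proof
      assume "w = restrict (\<lambda>_. 0) {0..<k+h}"
      then have "w i0 = 0" using i0k by simp
      with wi0 show False by simp
    qed
    have sub: "{p \<in> {0..<k+h}. w p \<noteq> 0} \<subseteq> S"
    proof clarify
      fix p assume p: "p \<in> {0..<k+h}" and wp: "w p \<noteq> 0"
      show "p \<in> S"
      proof (cases "p < k")
        case True
        then show ?thesis using wp wval[of p] p by (auto simp: codeword_def sym_val_def x'_def split: if_splits)
      next
        case False
        have r: "p - k < h" using p False by auto
        have "(\<Sum>i<k. c (p - k, i) * x' i) = (\<Sum>i\<in>{..<k}. if i \<in> S then c (p - k, i) * x i else 0)"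
          by (rule sum.cong) (auto simp: x'_def)
        also have "\<dots> = (\<Sum>i\<in>{..<k} \<inter> S. c (p - k, i) * x i)"
          by (rule sum.inter_restrict[symmetric]) simp
        also have "{..<k} \<inter> S = S" using S by auto
        also have "(\<Sum>i\<in>S. c (p - k, i) * x i) = 0" using H r by blast
        finally have "w p = 0" using wval[of p] p False by (simp add: codeword_def sym_val_def)
        with wp show ?thesis by simp
      qed
    qed
    have finS: "finite S" using S finite_subset by blast
    have hw: "hamming_weight {0..<k+h} w \<le> h"
      unfolding hamming_weight_def using card_mono[OF finS sub] cS by simp
    have fin: "finite (punctured_code k r h g c ?E)"
      unfolding punctured_code_def data_vectors_def by (simp add: finite_PiE)
    have "min_distance {0..<k+h} (punctured_code k r h g c ?E) \<le> hamming_weight {0..<k+h} w"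
      unfolding min_distance_def by (rule Min_le) (use fin wC wnz in auto)
    with md hw show False by simp
  qed
qed

theorem theorem20:
  fixes k r h :: nat and g :: "nat \<Rightarrow> nat"
  assumes "k > 0" and "r > 0" and "h > 0"
    and "r dvd (k + h)"
    and "valid_grouping k r h g"
    and "CARD('a::{finite,field}) \<le> (k div 2) choose (h - 1)"
  shows "prob_MR k r h g TYPE('a)
           \<le> (1 - 1 / (2 ^ h * exp (real h - 1))) powr (real k / 2)"
proof -
  let ?q = "CARD('a)"
  define m where "m = k div 2"
  have mk: "m \<le> k" by (simp add: m_def)
  have "card {S. S \<subseteq> {0..<m} \<and> card S = h - 1} = m choose (h - 1)"
    using n_subsets[of "{0..<m}" "h - 1"] by simp
  then have "?q \<le> card {S. S \<subseteq> {0..<m} \<and> card S = h - 1}" using assms(6) m_def by simp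
  then obtain F where F: "F \<subseteq> {S. S \<subseteq> {0..<m} \<and> card S = h - 1}" and cF: "card F = ?q"
    by (meson obtain_subset_with_card_n)
  have F': "\<forall>S\<in>F. S \<subseteq> {0..<m}" using F by blast
  let ?B = "real ?q ^ h / 2"
  have Bb: "\<forall>j\<ge>m. \<forall>c\<in>Sset h m F j TYPE('a). real (card (({0..<h} \<rightarrow>\<^sub>E (UNIV::'a set)) - bad h c F)) \<le> ?B"
  proof (intro allI impI ballI)
    fix j c assume "c \<in> Sset h m F j TYPE('a)"
    then have "indep h c {0..<m}" by (simp add: Sset_def)
    then show "real (card (({0..<h} \<rightarrow>\<^sub>E (UNIV::'a set)) - bad h c F)) \<le> ?B"
      by (rule core[OF _ F cF assms(3)])
  qed
  have S_bound: "real (card (Sset h m F (m + (k - m)) TYPE('a))) \<le> real ?q ^ (h * m) * ?B ^ (k - m)"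
    by (rule iter[OF F' _ Bb]) simp
  let ?MR = "{c :: nat \<times> nat \<Rightarrow> 'a. c \<in> coeff_space k h \<and> maximally_recoverable k r h g c}"
  have sub: "?MR \<subseteq> Sset h m F k TYPE('a)"
  proof clarify
    fix c :: "nat \<times> nat \<Rightarrow> 'a" assume c: "c \<in> coeff_space k h" and mr: "maximally_recoverable k r h g c"
    have ik: "indep h c {0..<k}" by (rule mr_indep[OF mr])
    have "col h c i \<notin> bad h c F" if i: "i \<in> {m..<k}" for i
    proof
      assume "col h c i \<in> bad h c F"
      then obtain S where S: "S \<in> F" "col h c i \<in> WS h c S" unfolding bad_def by blast
      have Sm: "S \<subseteq> {0..<m}" "card S = h - 1" using F S(1) by auto
      have SS: "S \<subseteq> {0..<k}" "finite S" "card S = h - 1" "i \<notin> S"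
        using Sm mk i finite_subset[OF Sm(1)] by auto
      have "i \<in> {0..<k}" using i by simp
      then have "col h c i \<notin> WS h c S" using col_notin_WS[OF ik SS(1) SS(2) SS(3) assms(3), of i] SS(4) by blast
      then show False using S(2) by blast
    qed
    then show "c \<in> Sset h m F k TYPE('a)"
      unfolding Sset_def using c indep_mono[OF ik, of "{0..<m}"] mk by (simp add: coeff_space_def)
  qed
  have finS: "finite (Sset h m F k TYPE('a))"
    by (rule finite_subset[of _ "({0..<h} \<times> {0..<k}) \<rightarrow>\<^sub>E (UNIV::'a set)"])
       (auto simp: Sset_def intro!: finite_PiE)
  have c1: "real (card ?MR) \<le> real (card (Sset h m F k TYPE('a)))"
    using card_mono[OF finS sub] by simp
  have mkk: "m + (k - m) = k" using mk by simp
  have cMR: "real (card ?MR) \<le> real ?q ^ (h * m) * ?B ^ (k - m)"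
    using c1 S_bound unfolding mkk by linarith
  have cC: "card (coeff_space k h :: (nat \<times> nat \<Rightarrow> 'a) set) = ?q ^ (h * k)"
    by (simp add: coeff_space_def card_PiE card_cartesian_product)
  have qpos: "real ?q > 0" by simp
  have Bp: "?B ^ (k - m) = real ?q ^ (h * (k - m)) / 2 ^ (k - m)"
    by (simp only: power_divide power_mult)
  have hh: "h * m + h * (k - m) = h * k" using mk by (simp add: diff_mult_distrib2)
  have eq: "real ?q ^ (h * m) * ?B ^ (k - m) = real ?q ^ (h * k) / 2 ^ (k - m)"
  proof -
    have "real ?q ^ (h * m) * ?B ^ (k - m) = real ?q ^ (h * m) * real ?q ^ (h * (k - m)) / 2 ^ (k - m)"
      unfolding Bp by simp
    also have "real ?q ^ (h * m) * real ?q ^ (h * (k - m)) = real ?q ^ (h * k)"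
      unfolding hh[symmetric] by (simp only: power_add)
    finally show ?thesis .
  qed
  have Qpos: "real ?q ^ (h * k) > 0" using qpos by simp
  have P: "prob_MR k r h g TYPE('a) \<le> (1/2) ^ (k - m)"
  proof -
    have "prob_MR k r h g TYPE('a) = real (card ?MR) / real ?q ^ (h * k)"
      unfolding prob_MR_def cC by simp
    also have "\<dots> \<le> (real ?q ^ (h * k) / 2 ^ (k - m)) / real ?q ^ (h * k)"
      by (rule divide_right_mono) (use cMR eq Qpos in auto)
    also have "\<dots> = 1 / 2 ^ (k - m)" using Qpos by simp
    also have "\<dots> = (1/2) ^ (k - m)" by (simp only: power_one_over)
    finally show ?thesis .
  qed
  have "(1/2::real) ^ (k - m) = (1/2) powr real (k - m)" by (simp add: powr_realpow)
  also have "\<dots> \<le> (1/2) powr (real k / 2)"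
  proof (rule powr_mono')
    have "k \<le> 2 * (k - m)" unfolding m_def by linarith
    then have "real k \<le> real (2 * (k - m))" by (rule of_nat_mono)
    then show "real k / 2 \<le> real (k - m)" by simp
  qed auto
  also have "\<dots> \<le> (1 - 1 / (2 ^ h * exp (real h - 1))) powr (real k / 2)"
  proof (rule powr_mono2)
    have a: "(2::real) \<le> 2 ^ h" using power_increasing[of 1 h "2::real"] assms(3) by simp
    have b: "1 \<le> exp (real h - 1)" using assms(3) by simp
    have X: "(2::real) * 1 \<le> 2 ^ h * exp (real h - 1)" by (rule mult_mono[OF a b]) auto
    have "1 / (2 ^ h * exp (real h - 1)) \<le> (1::real) / 2"
      by (rule divide_left_mono) (use X in auto)
    then show "1/2 \<le> 1 - 1 / (2 ^ h * exp (real h - 1))" by simp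
  qed auto
  finally show ?thesis using P by linarith
qed

end
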